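(* Let $\mathsf{K}$ be a variety, $\mathbf{B}\in\mathsf{K}$, and $\mathbf{A}\leq\mathbf{B}$ fully epic in $\mathsf{K}$. For all congruences $\theta_1,\theta_2$ of $\mathbf{B}$, \[(\theta_1+^{\mathbf{B}}\theta_2){\upharpoonright}_A=\theta_1{\upharpoonright}_A+^{\mathbf{A}}\theta_2{\upharpoonright}_A.\]
   Context: For an algebra $\mathbf{C}$, $+^{\mathbf{C}}$ denotes the join in the congruence lattice of $\mathbf{C}$; $\theta{\upharpoonright}_A=\theta\cap(A\times A)$. $\mathbf{A}\leq\mathbf{B}$ is epic in $\mathsf{K}$ if for all $\mathbf{C}\in\mathsf{K}$ and homomorphisms $g,h\colon\mathbf{B}\to\mathbf{C}$, $g{\upharpoonright}_A=h{\upharpoonright}_A$ implies $g=h$; it is full in $\mathsf{K}$ if it is proper, almost total ($B=\mathrm{Sg}^{\mathbf{B}}(A\cup\{b\})$ for some $b$), and every congruence $\theta\neq\mathrm{id}_B$ of $\mathbf{B}$ relates each $b\in B$ to some $a\in A$; fully epic means full and epic. *)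

theory Defs
  imports Main
begin

type_synonym ('f, 'a) alg = "'a set \<times> ('f \<Rightarrow> 'a list \<Rightarrow> 'a)"

definition is_algebra :: "('f \<Rightarrow> nat) \<Rightarrow> ('f, 'a) alg \<Rightarrow> bool" where
  "is_algebra ar Alg \<longleftrightarrow> fst Alg \<noteq> {} \<and>
     (\<forall>f xs. length xs = ar f \<and> set xs \<subseteq> fst Alg \<longrightarrow> snd Alg f xs \<in> fst Alg)"

datatype ('f, 'v) trm = Var 'v | App 'f "('f, 'v) trm list"

fun wf_trm :: "('f \<Rightarrow> nat) \<Rightarrow> ('f, 'v) trm \<Rightarrow> bool" where
  "wf_trm ar (Var v) = True"
| "wf_trm ar (App f ts) = (length ts = ar f \<and> (\<forall>t\<in>set ts. wf_trm ar t))"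

fun eval_trm :: "('f \<Rightarrow> 'a list \<Rightarrow> 'a) \<Rightarrow> ('v \<Rightarrow> 'a) \<Rightarrow> ('f, 'v) trm \<Rightarrow> 'a" where
  "eval_trm F \<sigma> (Var v) = \<sigma> v"
| "eval_trm F \<sigma> (App f ts) = F f (map (eval_trm F \<sigma>) ts)"

definition in_variety ::
  "('f \<Rightarrow> nat) \<Rightarrow> (('f, nat) trm \<times> ('f, nat) trm) set \<Rightarrow> ('f, 'a) alg \<Rightarrow> bool" where
  "in_variety ar Eqs Alg \<longleftrightarrow> is_algebra ar Alg \<and>
     (\<forall>(s, t)\<in>Eqs. wf_trm ar s \<and> wf_trm ar t \<longrightarrow>
        (\<forall>\<sigma>. range \<sigma> \<subseteq> fst Alg \<longrightarrow> eval_trm (snd Alg) \<sigma> s = eval_trm (snd Alg) \<sigma> t))"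

definition is_subalgebra :: "('f \<Rightarrow> nat) \<Rightarrow> 'a set \<Rightarrow> ('f, 'a) alg \<Rightarrow> bool" where
  "is_subalgebra ar A B \<longleftrightarrow> A \<subseteq> fst B \<and> is_algebra ar (A, snd B)"

definition Sg :: "('f \<Rightarrow> nat) \<Rightarrow> ('f, 'a) alg \<Rightarrow> 'a set \<Rightarrow> 'a set" where
  "Sg ar B X = \<Inter>{S. X \<subseteq> S \<and> S \<subseteq> fst B \<and>
      (\<forall>f xs. length xs = ar f \<and> set xs \<subseteq> S \<longrightarrow> snd B f xs \<in> S)}"

definition congruence :: "('f \<Rightarrow> nat) \<Rightarrow> ('f, 'a) alg \<Rightarrow> 'a rel \<Rightarrow> bool" where
  "congruence ar B \<theta> \<longleftrightarrow> equiv (fst B) \<theta> \<and>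
     (\<forall>f xs ys. length xs = ar f \<and> list_all2 (\<lambda>x y. (x, y) \<in> \<theta>) xs ys \<longrightarrow>
        (snd B f xs, snd B f ys) \<in> \<theta>)"

definition cong_join :: "('f \<Rightarrow> nat) \<Rightarrow> ('f, 'a) alg \<Rightarrow> 'a rel \<Rightarrow> 'a rel \<Rightarrow> 'a rel" where
  "cong_join ar B \<theta>1 \<theta>2 = \<Inter>{\<psi>. congruence ar B \<psi> \<and> \<theta>1 \<union> \<theta>2 \<subseteq> \<psi>}"

definition restr :: "'a rel \<Rightarrow> 'a set \<Rightarrow> 'a rel" where
  "restr \<theta> A = \<theta> \<inter> (A \<times> A)"

definition is_hom :: "('f \<Rightarrow> nat) \<Rightarrow> ('a \<Rightarrow> 'c) \<Rightarrow> ('f, 'a) alg \<Rightarrow> ('f, 'c) alg \<Rightarrow> bool" where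
  "is_hom ar h B C \<longleftrightarrow> h ` fst B \<subseteq> fst C \<and>
     (\<forall>f xs. length xs = ar f \<and> set xs \<subseteq> fst B \<longrightarrow> h (snd B f xs) = snd C f (map h xs))"

text \<open>The target algebras C range over algebras in K whose carrier lies in
the type of terms over 'b \<times> bool; this type is large enough to contain an isomorphic
copy of the subalgebra of any C generated by g(B) \<union> h(B), so (K being closed under
subalgebras and isomorphic copies) this is equivalent to quantifying over all C in K.\<close>

definition epic_in ::
  "('f \<Rightarrow> nat) \<Rightarrow> (('f, nat) trm \<times> ('f, nat) trm) set \<Rightarrow> 'b set \<Rightarrow> ('f, 'b) alg \<Rightarrow> bool" where
  "epic_in ar Eqs A B \<longleftrightarrow>
     (\<forall>(C :: ('f, ('f, 'b \<times> bool) trm) alg) g h.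
        in_variety ar Eqs C \<and> is_hom ar g B C \<and> is_hom ar h B C \<and> (\<forall>a\<in>A. g a = h a)
        \<longrightarrow> (\<forall>b\<in>fst B. g b = h b))"

definition full_in :: "('f \<Rightarrow> nat) \<Rightarrow> 'b set \<Rightarrow> ('f, 'b) alg \<Rightarrow> bool" where
  "full_in ar A B \<longleftrightarrow> A \<subset> fst B \<and>
     (\<exists>b\<in>fst B. fst B = Sg ar B (A \<union> {b})) \<and>
     (\<forall>\<theta>. congruence ar B \<theta> \<and> \<theta> \<noteq> Id_on (fst B) \<longrightarrow>
        (\<forall>b\<in>fst B. \<exists>a\<in>A. (b, a) \<in> \<theta>))"

definition fully_epic_in ::
  "('f \<Rightarrow> nat) \<Rightarrow> (('f, nat) trm \<times> ('f, nat) trm) set \<Rightarrow> 'b set \<Rightarrow> ('f, 'b) alg \<Rightarrow> bool" where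
  "fully_epic_in ar Eqs A B \<longleftrightarrow> full_in ar A B \<and> epic_in ar Eqs A B"

end

theory Submission
  imports Defs
begin

lemma la2_set: "list_all2 P xs ys \<Longrightarrow> (\<And>x y. P x y \<Longrightarrow> x \<in> S \<and> y \<in> S) \<Longrightarrow> set xs \<subseteq> S \<and> set ys \<subseteq> S"
  by (induction rule: list_all2_induct) auto

lemma cong_sym: "congruence ar X \<psi> \<Longrightarrow> (x, y) \<in> \<psi> \<Longrightarrow> (y, x) \<in> \<psi>"
  unfolding congruence_def equiv_def sym_def by blast
lemma cong_trans: "congruence ar X \<psi> \<Longrightarrow> (x, y) \<in> \<psi> \<Longrightarrow> (y, z) \<in> \<psi> \<Longrightarrow> (x, z) \<in> \<psi>"
  unfolding congruence_def equiv_def trans_def by blast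
lemma cong_refl: "congruence ar X \<psi> \<Longrightarrow> x \<in> fst X \<Longrightarrow> (x, x) \<in> \<psi>"
  unfolding congruence_def equiv_def refl_on_def by blast

lemma alg_closed: "is_algebra ar X \<Longrightarrow> length xs = ar f \<Longrightarrow> set xs \<subseteq> fst X \<Longrightarrow> snd X f xs \<in> fst X"
  unfolding is_algebra_def by blast

lemma cong_full:
  assumes "is_algebra ar X" shows "congruence ar X (fst X \<times> fst X)"
  unfolding congruence_def
proof (intro conjI allI impI)
  show "equiv (fst X) (fst X \<times> fst X)"
    by (rule equivI) (auto simp: refl_on_def sym_def trans_def)
  fix f xs ys assume h: "length xs = ar f \<and> list_all2 (\<lambda>x y. (x, y) \<in> fst X \<times> fst X) xs ys"
  then have h1: "length xs = ar f" and h2: "list_all2 (\<lambda>x y. (x, y) \<in> fst X \<times> fst X) xs ys" by auto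
  have h3: "length ys = ar f" using h1 list_all2_lengthD[OF h2] by simp
  have s: "set xs \<subseteq> fst X \<and> set ys \<subseteq> fst X" by (rule la2_set[OF h2]) simp
  show "(snd X f xs, snd X f ys) \<in> fst X \<times> fst X"
    using alg_closed[OF assms h1] alg_closed[OF assms h3] s by simp
qed

lemma cong_sub: "congruence ar X \<theta> \<Longrightarrow> \<theta> \<subseteq> fst X \<times> fst X"
  unfolding congruence_def equiv_def refl_on_def by blast

lemma cong_comp: "congruence ar X \<psi> \<Longrightarrow> length xs = ar f \<Longrightarrow> list_all2 (\<lambda>x y. (x, y) \<in> \<psi>) xs ys
   \<Longrightarrow> (snd X f xs, snd X f ys) \<in> \<psi>"
  unfolding congruence_def by blast

lemma join_props:
  assumes "is_algebra ar X" "\<theta>1 \<union> \<theta>2 \<subseteq> fst X \<times> fst X"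
  shows "congruence ar X (cong_join ar X \<theta>1 \<theta>2)" "\<theta>1 \<union> \<theta>2 \<subseteq> cong_join ar X \<theta>1 \<theta>2"
proof -
  define F where "F = {\<psi>. congruence ar X \<psi> \<and> \<theta>1 \<union> \<theta>2 \<subseteq> \<psi>}"
  have J: "cong_join ar X \<theta>1 \<theta>2 = \<Inter>F" unfolding F_def cong_join_def by simp
  have ne: "fst X \<times> fst X \<in> F" using assms cong_full unfolding F_def by blast
  have memF: "\<psi> \<in> F \<Longrightarrow> congruence ar X \<psi>" for \<psi> unfolding F_def by blast
  show "\<theta>1 \<union> \<theta>2 \<subseteq> cong_join ar X \<theta>1 \<theta>2" unfolding cong_join_def by blast
  have eq: "equiv (fst X) (\<Inter>F)"
  proof (rule equivI)
    show "\<Inter>F \<subseteq> fst X \<times> fst X" using ne by (rule Inter_lower)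
    show "refl_on (fst X) (\<Inter>F)"
      unfolding refl_on_def
    proof (intro ballI InterI)
      fix x \<psi> assume "x \<in> fst X" "\<psi> \<in> F"
      then show "(x, x) \<in> \<psi>" using cong_refl[OF memF[OF \<open>\<psi> \<in> F\<close>] \<open>x \<in> fst X\<close>] by simp
    qed
    show "sym (\<Inter>F)"
    proof (rule symI)
      fix x y assume "(x, y) \<in> \<Inter>F"
      then show "(y, x) \<in> \<Inter>F"
      proof (intro InterI)
        fix \<psi> assume "(x, y) \<in> \<Inter>F" "\<psi> \<in> F"
        then have "(x, y) \<in> \<psi>" by (rule InterD)
        then show "(y, x) \<in> \<psi>" by (rule cong_sym[OF memF[OF \<open>\<psi> \<in> F\<close>]])
      qed
    qed
    show "trans (\<Inter>F)"
    proof (rule transI)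
      fix x y z assume "(x, y) \<in> \<Inter>F" "(y, z) \<in> \<Inter>F"
      then show "(x, z) \<in> \<Inter>F"
      proof (intro InterI)
        fix \<psi> assume "(x, y) \<in> \<Inter>F" "(y, z) \<in> \<Inter>F" "\<psi> \<in> F"
        then have "(x, y) \<in> \<psi>" "(y, z) \<in> \<psi>" by (auto dest: InterD)
        then show "(x, z) \<in> \<psi>" by (rule cong_trans[OF memF[OF \<open>\<psi> \<in> F\<close>]])
      qed
    qed
  qed
  have comp: "(snd X f xs, snd X f ys) \<in> \<Inter>F"
    if "length xs = ar f" "list_all2 (\<lambda>x y. (x, y) \<in> \<Inter>F) xs ys" for f xs ys
  proof
    fix \<psi> assume p: "\<psi> \<in> F"
    have "list_all2 (\<lambda>x y. (x, y) \<in> \<psi>) xs ys"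
      using that(2) by (rule list_all2_mono) (rule InterD[OF _ p])
    then show "(snd X f xs, snd X f ys) \<in> \<psi>" by (rule cong_comp[OF memF[OF p] that(1)])
  qed
  show "congruence ar X (cong_join ar X \<theta>1 \<theta>2)"
    unfolding J congruence_def using eq comp by (intro conjI allI impI) auto
qed

lemma join_least:
  "congruence ar X \<psi> \<Longrightarrow> \<theta>1 \<union> \<theta>2 \<subseteq> \<psi> \<Longrightarrow> cong_join ar X \<theta>1 \<theta>2 \<subseteq> \<psi>"
  unfolding cong_join_def by blast

lemma restr_cong:
  assumes "congruence ar B \<theta>" "is_subalgebra ar A B"
  shows "congruence ar (A, snd B) (restr \<theta> A)"
proof -
  have AB: "A \<subseteq> fst B" and alg: "is_algebra ar (A, snd B)" using assms(2) unfolding is_subalgebra_def by blast+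
  have eq: "equiv A (restr \<theta> A)"
  proof (rule equivI)
    show "restr \<theta> A \<subseteq> A \<times> A" unfolding restr_def by blast
    show "refl_on A (restr \<theta> A)"
      unfolding refl_on_def restr_def using AB cong_refl[OF assms(1)] by (simp add: subset_iff)
    show "sym (restr \<theta> A)"
    proof (rule symI)
      fix x y assume "(x, y) \<in> restr \<theta> A"
      then have "(x, y) \<in> \<theta>" "x \<in> A" "y \<in> A" by (simp_all add: restr_def)
      then show "(y, x) \<in> restr \<theta> A" using cong_sym[OF assms(1), of x y] by (simp add: restr_def)
    qed
    show "trans (restr \<theta> A)"
    proof (rule transI)
      fix x y z assume "(x, y) \<in> restr \<theta> A" "(y, z) \<in> restr \<theta> A"
      then have "(x, y) \<in> \<theta>" "(y, z) \<in> \<theta>" "x \<in> A" "z \<in> A" by (simp_all add: restr_def)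
      then show "(x, z) \<in> restr \<theta> A" using cong_trans[OF assms(1), of x y z] by (simp add: restr_def)
    qed
  qed
  have l1: "list_all2 (\<lambda>x y. (x, y) \<in> \<theta>) xs ys" if "list_all2 (\<lambda>x y. (x, y) \<in> restr \<theta> A) xs ys" for xs ys
    using that by (rule list_all2_mono) (simp add: restr_def)
  have l2: "set xs \<subseteq> A \<and> set ys \<subseteq> A" if "list_all2 (\<lambda>x y. (x, y) \<in> restr \<theta> A) xs ys" for xs ys
    by (rule la2_set[OF that]) (simp add: restr_def)
  show ?thesis unfolding congruence_def
  proof (intro conjI allI impI)
    show "equiv (fst (A, snd B)) (restr \<theta> A)" using eq by simp
    fix f xs ys assume h: "length xs = ar f \<and> list_all2 (\<lambda>x y. (x, y) \<in> restr \<theta> A) xs ys"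
    from h have h1: "length xs = ar f" and h2: "list_all2 (\<lambda>x y. (x, y) \<in> restr \<theta> A) xs ys" by auto
    have "(snd B f xs, snd B f ys) \<in> \<theta>" by (rule cong_comp[OF assms(1) h1 l1[OF h2]])
    moreover have h3: "length ys = ar f" using h1 list_all2_lengthD[OF h2] by simp
    have s: "set xs \<subseteq> A" "set ys \<subseteq> A" using l2[OF h2] by auto
    have "snd B f xs \<in> A" using alg_closed[OF alg h1] s by simp
    moreover have "snd B f ys \<in> A" using alg_closed[OF alg h3] s by simp
    ultimately show "(snd (A, snd B) f xs, snd (A, snd B) f ys) \<in> restr \<theta> A" by (simp add: restr_def)
  qed
qed


lemma la2_map1: "(\<And>x. x \<in> set xs \<Longrightarrow> P (g x) x) \<Longrightarrow> list_all2 P (map g xs) xs"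
  by (induction xs) auto

lemma la2_map2: "(\<And>x. x \<in> set xs \<Longrightarrow> P x (g x)) \<Longrightarrow> list_all2 P xs (map g xs)"
  by (induction xs) auto

lemma la2_map_eq: "list_all2 (\<lambda>x y. g x = g y) xs ys \<Longrightarrow> map g xs = map g ys"
  by (induction rule: list_all2_induct) auto

lemma kernel_cong:
  assumes "is_hom ar g B C" and algB: "is_algebra ar B"
  shows "congruence ar B {(b, c). b \<in> fst B \<and> c \<in> fst B \<and> g b = g c}" (is "congruence ar B ?K")
  unfolding congruence_def
proof (intro conjI allI impI)
  show "equiv (fst B) ?K"
    by (rule equivI) (auto simp: refl_on_def sym_def trans_def)
  fix f xs ys assume h: "length xs = ar f \<and> list_all2 (\<lambda>x y. (x, y) \<in> ?K) xs ys"
  then have h1: "length xs = ar f" and h2: "list_all2 (\<lambda>x y. (x, y) \<in> ?K) xs ys" by auto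
  have h3: "length ys = ar f" using h1 list_all2_lengthD[OF h2] by simp
  have s: "set xs \<subseteq> fst B \<and> set ys \<subseteq> fst B" by (rule la2_set[OF h2]) auto
  have "list_all2 (\<lambda>x y. g x = g y) xs ys" using h2 by (rule list_all2_mono) auto
  then have m: "map g xs = map g ys" by (rule la2_map_eq)
  have "g (snd B f xs) = snd C f (map g xs)" using assms h1 s unfolding is_hom_def by blast
  also have "\<dots> = snd C f (map g ys)" using m by simp
  also have "\<dots> = g (snd B f ys)" using assms h3 s unfolding is_hom_def by metis
  finally have e: "g (snd B f xs) = g (snd B f ys)" .
  have "snd B f xs \<in> fst B" "snd B f ys \<in> fst B"
    using alg_closed[OF algB h1] alg_closed[OF algB h3] s by auto
  then show "(snd B f xs, snd B f ys) \<in> ?K" using e by simp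
qed


definition rep :: "'b rel \<Rightarrow> 'b \<Rightarrow> 'b" where "rep \<phi> x = (SOME z. (x, z) \<in> \<phi>)"

fun dec :: "('f, 'b \<times> bool) trm \<Rightarrow> 'b" where
  "dec (Var v) = fst v"
| "dec (App f ts) = undefined"

definition enc :: "'b \<Rightarrow> ('f, 'b \<times> bool) trm" where "enc a = Var (a, True)"

lemma dec_enc[simp]: "dec (enc a) = a" by (simp add: enc_def)
lemma enc_inj[simp]: "(enc a = enc b) = (a = b)" by (simp add: enc_def)

definition Cq :: "('f, 'b) alg \<Rightarrow> 'b set \<Rightarrow> 'b rel \<Rightarrow> ('f, ('f, 'b \<times> bool) trm) alg" where
  "Cq B A \<phi> = (enc ` rep \<phi> ` A, \<lambda>f xs. enc (rep \<phi> (snd B f (map dec xs))))"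

definition gm :: "'b set \<Rightarrow> 'b rel \<Rightarrow> 'b rel \<Rightarrow> 'b \<Rightarrow> ('f, 'b \<times> bool) trm" where
  "gm A \<phi> \<theta> b = enc (rep \<phi> (SOME a. a \<in> A \<and> (b, a) \<in> \<theta>))"

locale setting =
  fixes ar :: "'f \<Rightarrow> nat" and B :: "('f, 'b) alg" and A :: "'b set" and \<phi> :: "'b rel"
  assumes sub: "is_subalgebra ar A B" and phi: "congruence ar (A, snd B) \<phi>"
begin

lemma AB: "A \<subseteq> fst B" and algA: "is_algebra ar (A, snd B)"
  using sub unfolding is_subalgebra_def by blast+

lemma closA: "length xs = ar f \<Longrightarrow> set xs \<subseteq> A \<Longrightarrow> snd B f xs \<in> A"
  using alg_closed[OF algA] by fastforce

lemma rep_rel: "x \<in> A \<Longrightarrow> (x, rep \<phi> x) \<in> \<phi>"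
proof -
  assume "x \<in> A"
  then have "(x, x) \<in> \<phi>" using cong_refl[OF phi, of x] by simp
  then show ?thesis unfolding rep_def by (rule someI)
qed

lemma phi_sub: "\<phi> \<subseteq> A \<times> A" using cong_sub[OF phi] by simp

lemma rep_in: "x \<in> A \<Longrightarrow> rep \<phi> x \<in> A"
  using rep_rel phi_sub by blast

lemma rep_eq: "(x, y) \<in> \<phi> \<Longrightarrow> rep \<phi> x = rep \<phi> y"
proof -
  assume xy: "(x, y) \<in> \<phi>"
  have "(\<lambda>z. (x, z) \<in> \<phi>) = (\<lambda>z. (y, z) \<in> \<phi>)"
  proof (rule ext, rule iffI)
    fix z assume "(x, z) \<in> \<phi>"
    then show "(y, z) \<in> \<phi>" using cong_trans[OF phi cong_sym[OF phi xy]] by blast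
  next
    fix z assume "(y, z) \<in> \<phi>"
    then show "(x, z) \<in> \<phi>" using cong_trans[OF phi xy] by blast
  qed
  then show ?thesis unfolding rep_def by simp
qed

lemma rep_eqD: "x \<in> A \<Longrightarrow> y \<in> A \<Longrightarrow> rep \<phi> x = rep \<phi> y \<Longrightarrow> (x, y) \<in> \<phi>"
  using rep_rel[of x] rep_rel[of y] cong_sym[OF phi] cong_trans[OF phi] by metis

lemma rep_rep: "x \<in> A \<Longrightarrow> rep \<phi> (rep \<phi> x) = rep \<phi> x"
  using rep_eq[OF cong_sym[OF phi rep_rel]] by metis

lemma eval_C:
  assumes "range \<sigma> \<subseteq> fst (Cq B A \<phi>)"
  shows "wf_trm ar t \<Longrightarrow> eval_trm (snd B) (dec \<circ> \<sigma>) t \<in> A \<and>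
     eval_trm (snd (Cq B A \<phi>)) \<sigma> t = enc (rep \<phi> (eval_trm (snd B) (dec \<circ> \<sigma>) t))"
proof (induction t)
  case (Var v)
  have "\<sigma> v \<in> enc ` rep \<phi> ` A" using assms unfolding Cq_def by auto
  then obtain a where a: "a \<in> A" "\<sigma> v = enc (rep \<phi> a)" by blast
  then show ?case using rep_in rep_rep by simp
next
  case (App f ts)
  let ?e = "eval_trm (snd B) (dec \<circ> \<sigma>)"
  let ?vs = "map ?e ts"
  have len: "length ts = ar f" and wf: "\<forall>t\<in>set ts. wf_trm ar t" using App.prems by auto
  have IH: "t \<in> set ts \<Longrightarrow> ?e t \<in> A \<and> eval_trm (snd (Cq B A \<phi>)) \<sigma> t = enc (rep \<phi> (?e t))" for t
    using App.IH wf by blast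
  have vsA: "set ?vs \<subseteq> A" using IH by auto
  have lv: "length ?vs = ar f" using len by simp
  have in1: "snd B f ?vs \<in> A" by (rule closA[OF lv vsA])
  have m: "map dec (map (eval_trm (snd (Cq B A \<phi>)) \<sigma>) ts) = map (rep \<phi>) ?vs"
    using IH by auto
  have la: "list_all2 (\<lambda>x y. (x, y) \<in> \<phi>) (map (rep \<phi>) ?vs) ?vs"
    by (rule la2_map1) (use vsA cong_sym[OF phi rep_rel] in blast)
  have "(snd (A, snd B) f (map (rep \<phi>) ?vs), snd (A, snd B) f ?vs) \<in> \<phi>"
    by (rule cong_comp[OF phi _ la]) (simp add: len)
  then have r: "rep \<phi> (snd B f (map (rep \<phi>) ?vs)) = rep \<phi> (snd B f ?vs)" using rep_eq by simp
  have "eval_trm (snd (Cq B A \<phi>)) \<sigma> (App f ts)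
     = enc (rep \<phi> (snd B f (map dec (map (eval_trm (snd (Cq B A \<phi>)) \<sigma>) ts))))"
    by (simp add: Cq_def del: map_map)
  also have "\<dots> = enc (rep \<phi> (snd B f (map (rep \<phi>) ?vs)))" by (simp only: m)
  also have "\<dots> = enc (rep \<phi> (snd B f ?vs))" by (simp only: r)
  finally show ?case using in1 by (simp add: comp_def)
qed

lemma C_variety:
  assumes "in_variety ar Eqs B"
  shows "in_variety ar Eqs (Cq B A \<phi>)"
  unfolding in_variety_def
proof (intro conjI)
  have Ane: "A \<noteq> {}" using algA unfolding is_algebra_def by simp
  show "is_algebra ar (Cq B A \<phi>)"
    unfolding is_algebra_def
  proof (intro conjI allI impI)
    show "fst (Cq B A \<phi>) \<noteq> {}" using Ane by (simp add: Cq_def)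
    fix f xs assume h: "length xs = ar f \<and> set xs \<subseteq> fst (Cq B A \<phi>)"
    have "set (map dec xs) \<subseteq> A" using h rep_in by (auto simp: Cq_def)
    then have "snd B f (map dec xs) \<in> A" using h closA by simp
    then show "snd (Cq B A \<phi>) f xs \<in> fst (Cq B A \<phi>)" by (simp add: Cq_def)
  qed
  show "\<forall>(s, t)\<in>Eqs. wf_trm ar s \<and> wf_trm ar t \<longrightarrow>
        (\<forall>\<sigma>. range \<sigma> \<subseteq> fst (Cq B A \<phi>) \<longrightarrow>
             eval_trm (snd (Cq B A \<phi>)) \<sigma> s = eval_trm (snd (Cq B A \<phi>)) \<sigma> t)"
  proof (intro ballI impI allI, clarify)
    fix s t and \<sigma> :: "nat \<Rightarrow> ('f, 'b \<times> bool) trm" assume st: "(s, t) \<in> Eqs" "wf_trm ar s" "wf_trm ar t" and r: "range \<sigma> \<subseteq> fst (Cq B A \<phi>)"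
    have rd: "range (dec \<circ> \<sigma>) \<subseteq> fst B"
    proof
      fix y assume "y \<in> range (dec \<circ> \<sigma>)"
      then obtain x where x: "y = dec (\<sigma> x)" by auto
      have "\<sigma> x \<in> enc ` rep \<phi> ` A" using r by (auto simp: Cq_def)
      then obtain a where "a \<in> A" "\<sigma> x = enc (rep \<phi> a)" by blast
      then show "y \<in> fst B" using x rep_in AB by auto
    qed
    have "eval_trm (snd B) (dec \<circ> \<sigma>) s = eval_trm (snd B) (dec \<circ> \<sigma>) t"
      using assms st rd unfolding in_variety_def by blast
    then show "eval_trm (snd (Cq B A \<phi>)) \<sigma> s = eval_trm (snd (Cq B A \<phi>)) \<sigma> t"
      using eval_C[OF r st(2)] eval_C[OF r st(3)] by simp
  qed
qed

end


context setting
begin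

lemma gm_props:
  assumes th: "congruence ar B \<theta>" and thA: "restr \<theta> A \<subseteq> \<phi>"
    and full: "\<forall>b\<in>fst B. \<exists>a\<in>A. (b, a) \<in> \<theta>"
  shows "\<And>a. a \<in> A \<Longrightarrow> (gm A \<phi> \<theta> a :: ('f, 'b \<times> bool) trm) = enc (rep \<phi> a)"
    and "\<And>b c. (b, c) \<in> \<theta> \<Longrightarrow> (gm A \<phi> \<theta> b :: ('f, 'b \<times> bool) trm) = gm A \<phi> \<theta> c"
    and "is_hom ar (gm A \<phi> \<theta>) B (Cq B A \<phi>)"
proof -
  define sl where "sl b = (SOME a. a \<in> A \<and> (b, a) \<in> \<theta>)" for b
  have gdef: "gm A \<phi> \<theta> b = enc (rep \<phi> (sl b))" for b unfolding gm_def sl_def by simp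
  have slp: "sl b \<in> A \<and> (b, sl b) \<in> \<theta>" if "b \<in> fst B" for b
  proof -
    have ex: "\<exists>a. a \<in> A \<and> (b, a) \<in> \<theta>" using full that by blast
    show ?thesis unfolding sl_def using someI_ex[OF ex] .
  qed
  have thsub: "\<theta> \<subseteq> fst B \<times> fst B" by (rule cong_sub[OF th])
  have tA: "(x, y) \<in> \<theta> \<Longrightarrow> x \<in> A \<Longrightarrow> y \<in> A \<Longrightarrow> (x, y) \<in> \<phi>" for x y
  proof -
    assume "(x, y) \<in> \<theta>" "x \<in> A" "y \<in> A"
    then have "(x, y) \<in> restr \<theta> A" unfolding restr_def by simp
    then show "(x, y) \<in> \<phi>" using thA by (rule subsetD[rotated])
  qed
  show gA: "gm A \<phi> \<theta> a = enc (rep \<phi> a)" if "a \<in> A" for a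
  proof -
    have aB: "a \<in> fst B" using that AB by blast
    have "(a, sl a) \<in> \<phi>" using tA[of a "sl a"] slp[OF aB] that by blast
    then have "rep \<phi> a = rep \<phi> (sl a)" by (rule rep_eq)
    then show ?thesis unfolding gdef by simp
  qed
  show gth: "gm A \<phi> \<theta> b = gm A \<phi> \<theta> c" if "(b, c) \<in> \<theta>" for b c
  proof -
    have bc: "b \<in> fst B" "c \<in> fst B" using that thsub by auto
    have "(sl b, b) \<in> \<theta>" using slp[OF bc(1)] cong_sym[OF th] by blast
    then have "(sl b, c) \<in> \<theta>" by (rule cong_trans[OF th _ that])
    then have "(sl b, sl c) \<in> \<theta>" using slp[OF bc(2)] cong_trans[OF th, of "sl b" c "sl c"] by blast
    then have "(sl b, sl c) \<in> \<phi>" using slp[OF bc(1)] slp[OF bc(2)] tA[of "sl b" "sl c"] by blast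
    then have "rep \<phi> (sl b) = rep \<phi> (sl c)" by (rule rep_eq)
    then show ?thesis unfolding gdef by simp
  qed
  show "is_hom ar (gm A \<phi> \<theta>) B (Cq B A \<phi>)"
    unfolding is_hom_def
  proof (intro conjI allI impI)
    show "gm A \<phi> \<theta> ` fst B \<subseteq> fst (Cq B A \<phi>)"
    proof
      fix y :: "('f, 'b \<times> bool) trm" assume "y \<in> gm A \<phi> \<theta> ` fst B"
      then obtain b where b: "b \<in> fst B" "y = gm A \<phi> \<theta> b" by blast
      then have "y = enc (rep \<phi> (sl b))" "sl b \<in> A" using gdef slp by auto
      then show "y \<in> fst (Cq B A \<phi>)" unfolding Cq_def by simp
    qed
    fix f bs assume h: "length bs = ar f \<and> set bs \<subseteq> fst B"
    then have h1: "length bs = ar f" and h2: "set bs \<subseteq> fst B" by auto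
    let ?as = "map sl bs"
    have asA: "set ?as \<subseteq> A" using slp h2 by auto
    have las: "length ?as = ar f" using h1 by simp
    have l1: "list_all2 (\<lambda>x y. (x, y) \<in> \<theta>) bs ?as"
      by (rule la2_map2) (use slp h2 in blast)
    have e1: "(snd B f bs, snd B f ?as) \<in> \<theta>" by (rule cong_comp[OF th h1 l1])
    then have fbB: "snd B f bs \<in> fst B" using thsub by blast
    have e2: "(sl (snd B f bs), snd B f bs) \<in> \<theta>" using slp[OF fbB] cong_sym[OF th] by blast
    have e3: "(sl (snd B f bs), snd B f ?as) \<in> \<theta>" using cong_trans[OF th e2 e1] .
    have fa: "snd B f ?as \<in> A" by (rule closA[OF las asA])
    have e4: "(sl (snd B f bs), snd B f ?as) \<in> \<phi>" using tA[OF e3] slp[OF fbB] fa by blast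
    have l2: "list_all2 (\<lambda>x y. (x, y) \<in> \<phi>) ?as (map (rep \<phi>) ?as)"
      by (rule la2_map2) (use asA rep_rel in blast)
    have "(snd (A, snd B) f ?as, snd (A, snd B) f (map (rep \<phi>) ?as)) \<in> \<phi>"
      by (rule cong_comp[OF phi las l2])
    then have e5: "(snd B f ?as, snd B f (map (rep \<phi>) ?as)) \<in> \<phi>" by simp
    have "gm A \<phi> \<theta> (snd B f bs) = enc (rep \<phi> (sl (snd B f bs)))" by (rule gdef)
    also have "\<dots> = enc (rep \<phi> (snd B f ?as))" using rep_eq[OF e4] by simp
    also have "\<dots> = enc (rep \<phi> (snd B f (map (rep \<phi>) ?as)))" using rep_eq[OF e5] by simp
    also have "\<dots> = snd (Cq B A \<phi>) f (map (gm A \<phi> \<theta>) bs)"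
      by (simp add: Cq_def gdef comp_def)
    finally show "gm A \<phi> \<theta> (snd B f bs) = snd (Cq B A \<phi>) f (map (gm A \<phi> \<theta>) bs)" .
  qed
qed

end


theorem mainTheorem15:
  fixes ar :: "'f \<Rightarrow> nat"
    and Eqs :: "(('f, nat) trm \<times> ('f, nat) trm) set"
    and B :: "('f, 'b) alg"
    and A :: "'b set"
    and \<theta>1 \<theta>2 :: "'b rel"
  assumes "in_variety ar Eqs B"
    and "is_subalgebra ar A B"
    and "fully_epic_in ar Eqs A B"
    and "congruence ar B \<theta>1"
    and "congruence ar B \<theta>2"
  shows "restr (cong_join ar B \<theta>1 \<theta>2) A
           = cong_join ar (A, snd B) (restr \<theta>1 A) (restr \<theta>2 A)"
proof -
  note var = assms(1) and sub = assms(2) and fe = assms(3) and c1 = assms(4) and c2 = assms(5)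
  have algB: "is_algebra ar B" using var unfolding in_variety_def by blast
  have AB: "A \<subseteq> fst B" and algA: "is_algebra ar (A, snd B)" using sub unfolding is_subalgebra_def by blast+
  define J where "J = cong_join ar B \<theta>1 \<theta>2"
  define \<phi> where "\<phi> = cong_join ar (A, snd B) (restr \<theta>1 A) (restr \<theta>2 A)"
  have s12: "\<theta>1 \<union> \<theta>2 \<subseteq> fst B \<times> fst B" using cong_sub[OF c1] cong_sub[OF c2] by blast
  have Jc: "congruence ar B J" and Jsup: "\<theta>1 \<union> \<theta>2 \<subseteq> J"
    using join_props[OF algB s12] unfolding J_def by blast+
  have rJ: "congruence ar (A, snd B) (restr J A)" by (rule restr_cong[OF Jc sub])
  have rs: "restr \<theta>1 A \<union> restr \<theta>2 A \<subseteq> fst (A, snd B) \<times> fst (A, snd B)"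
    unfolding restr_def by auto
  have phic: "congruence ar (A, snd B) \<phi>" and phisup: "restr \<theta>1 A \<union> restr \<theta>2 A \<subseteq> \<phi>"
    using join_props[OF algA rs] unfolding \<phi>_def by blast+
  have "restr \<theta>1 A \<union> restr \<theta>2 A \<subseteq> restr J A" using Jsup unfolding restr_def by blast
  then have sup: "\<phi> \<subseteq> restr J A" unfolding \<phi>_def by (rule join_least[OF rJ])
  have sub1: "restr J A \<subseteq> \<phi>"
  proof (cases "\<theta>1 = Id_on (fst B) \<or> \<theta>2 = Id_on (fst B)")
    case True
    then obtain \<theta> where th: "\<theta> = \<theta>1 \<or> \<theta> = \<theta>2" and thc: "congruence ar B \<theta>" and
      un: "\<theta>1 \<union> \<theta>2 \<subseteq> \<theta>"
    proof
      assume "\<theta>1 = Id_on (fst B)"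
      then have "\<theta>1 \<subseteq> \<theta>2" using cong_refl[OF c2] by blast
      then show ?thesis using that[of \<theta>2] c2 by blast
    next
      assume "\<theta>2 = Id_on (fst B)"
      then have "\<theta>2 \<subseteq> \<theta>1" using cong_refl[OF c1] by blast
      then show ?thesis using that[of \<theta>1] c1 by blast
    qed
    have "J \<subseteq> \<theta>" unfolding J_def by (rule join_least[OF thc un])
    then have "restr J A \<subseteq> restr \<theta> A" unfolding restr_def by blast
    also have "\<dots> \<subseteq> \<phi>" using th phisup by blast
    finally show ?thesis .
  next
    case False
    have full: "full_in ar A B" and epic: "epic_in ar Eqs A B" using fe unfolding fully_epic_in_def by blast+
    have F1: "\<forall>b\<in>fst B. \<exists>a\<in>A. (b, a) \<in> \<theta>1" using full False c1 unfolding full_in_def by blast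
    have F2: "\<forall>b\<in>fst B. \<exists>a\<in>A. (b, a) \<in> \<theta>2" using full False c2 unfolding full_in_def by blast
    interpret setting ar B A \<phi> using sub phic by (unfold_locales)
    have t1: "restr \<theta>1 A \<subseteq> \<phi>" and t2: "restr \<theta>2 A \<subseteq> \<phi>" using phisup by blast+
    note g = gm_props[OF c1 t1 F1] and h = gm_props[OF c2 t2 F2]
    have Cv: "in_variety ar Eqs (Cq B A \<phi>)" by (rule C_variety[OF var])
    have agree: "\<forall>a\<in>A. (gm A \<phi> \<theta>1 a :: ('f, 'b \<times> bool) trm) = gm A \<phi> \<theta>2 a"
    proof
      fix a assume a: "a \<in> A"
      show "(gm A \<phi> \<theta>1 a :: ('f, 'b \<times> bool) trm) = gm A \<phi> \<theta>2 a" using g(1)[OF a] h(1)[OF a] by simp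
    qed
    have eqgh: "\<forall>b\<in>fst B. (gm A \<phi> \<theta>1 b :: ('f, 'b \<times> bool) trm) = gm A \<phi> \<theta>2 b"
      using epic Cv g(3) h(3) agree unfolding epic_in_def by blast
    define K where "K = {(b, c). b \<in> fst B \<and> c \<in> fst B \<and> (gm A \<phi> \<theta>1 b :: ('f, 'b \<times> bool) trm) = gm A \<phi> \<theta>1 c}"
    have Kc: "congruence ar B K" unfolding K_def by (rule kernel_cong[OF g(3) algB])
    have "\<theta>1 \<subseteq> K"
    proof
      fix p assume p: "p \<in> \<theta>1"
      obtain b c where bc: "p = (b, c)" by (cases p)
      then have "b \<in> fst B" "c \<in> fst B" using p cong_sub[OF c1] by blast+
      then show "p \<in> K" unfolding K_def using g(2)[of b c] p bc by simp
    qed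
    moreover have "\<theta>2 \<subseteq> K"
    proof
      fix p assume p: "p \<in> \<theta>2"
      obtain b c where bc: "p = (b, c)" by (cases p)
      then have bB: "b \<in> fst B" "c \<in> fst B" using p cong_sub[OF c2] by blast+
      have "(gm A \<phi> \<theta>2 b :: ('f, 'b \<times> bool) trm) = gm A \<phi> \<theta>2 c" using h(2)[of b c] p bc by simp
      then have "(gm A \<phi> \<theta>1 b :: ('f, 'b \<times> bool) trm) = gm A \<phi> \<theta>1 c" using eqgh bB by simp
      then show "p \<in> K" unfolding K_def using bB bc by simp
    qed
    ultimately have "J \<subseteq> K" unfolding J_def by (intro join_least[OF Kc]) blast
    show ?thesis
    proof
      fix p assume p: "p \<in> restr J A"
      obtain b c where bc: "p = (b, c)" by (cases p)
      have bA: "b \<in> A" "c \<in> A" and "(b, c) \<in> J" using p bc unfolding restr_def by auto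
      then have "(gm A \<phi> \<theta>1 b :: ('f, 'b \<times> bool) trm) = gm A \<phi> \<theta>1 c" using \<open>J \<subseteq> K\<close> unfolding K_def by blast
      then have "rep \<phi> b = rep \<phi> c" using g(1)[OF bA(1)] g(1)[OF bA(2)] by simp
      then have "(b, c) \<in> \<phi>" by (rule rep_eqD[OF bA])
      then show "p \<in> \<phi>" using bc by simp
    qed
  qed
  show ?thesis using sup sub1 unfolding J_def \<phi>_def by blast
qed

end
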